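(* Let $S$ be a countable set with a distinguished site $0$, let $\mathcal A$ be the $Q$-matrix of an irreducible continuous-time Markov chain on $S$ with transition probabilities $p_t(x,y)$ and Green function $G_\infty(0,0)=\int_0^\infty p_t(0,0)\,dt$, and let $\beta=\frac{1}{G_\infty(0,0)}+1$ (with $1/\infty=0$). For $m>\beta$ let $r(m)$ be the unique solution $\lambda$ of $\int_0^\infty e^{-\lambda t}p_t(0,0)\,dt=\frac1{m-1}$, and for $1\le m\le\beta$ set $r(m)=0$. Then $m\mapsto r(m)$ is convex on $[1,\infty)$, and $$r(1)=0,\qquad r(m)\le m-1\ \text{ for all } m\ge 1,\qquad \lim_{m\to\infty}\frac{r(m)}{m-1}=1.$$
   Context: $r(m)$ is the exponential growth rate of the moments of the number of particles in a supercritical catalytic branching process with mean offspring number $m$ and motion $\mathcal A$, catalyst at $0$. *)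

theory Defs
  imports "HOL-Analysis.Analysis"
begin

definition q_matrix :: "('a::countable \<Rightarrow> 'a \<Rightarrow> real) \<Rightarrow> bool" where
  "q_matrix A \<longleftrightarrow> (\<forall>x y. x \<noteq> y \<longrightarrow> A x y \<ge> 0) \<and> (\<forall>x. ((\<lambda>y. A x y) has_sum 0) UNIV)"

definition irreducible_ctmc :: "('a::countable \<Rightarrow> 'a \<Rightarrow> real) \<Rightarrow> (real \<Rightarrow> 'a \<Rightarrow> 'a \<Rightarrow> real) \<Rightarrow> bool" where
  "irreducible_ctmc A p \<longleftrightarrow>
     q_matrix A \<and>
     (\<forall>t\<ge>0. \<forall>x y. p t x y \<ge> 0) \<and>
     (\<forall>t\<ge>0. \<forall>x. ((\<lambda>y. p t x y) has_sum 1) UNIV) \<and>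
     (\<forall>x y. p 0 x y = (if x = y then 1 else 0)) \<and>
     (\<forall>s\<ge>0. \<forall>t\<ge>0. \<forall>x z. ((\<lambda>y. p s x y * p t y z) has_sum p (s + t) x z) UNIV) \<and>
     (\<forall>x y. ((\<lambda>t. p t x y) has_real_derivative A x y) (at_right 0)) \<and>
     (\<forall>t>0. \<forall>x y. p t x y > 0)"

definition green :: "(real \<Rightarrow> 'a \<Rightarrow> 'a \<Rightarrow> real) \<Rightarrow> 'a \<Rightarrow> ennreal" where
  "green p x0 = (\<integral>\<^sup>+ t\<in>{0..}. ennreal (p t x0 x0) \<partial>lborel)"

definition laplace_ret :: "(real \<Rightarrow> 'a \<Rightarrow> 'a \<Rightarrow> real) \<Rightarrow> 'a \<Rightarrow> real \<Rightarrow> ennreal" where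
  "laplace_ret p x0 lam = (\<integral>\<^sup>+ t\<in>{0..}. ennreal (exp (- lam * t) * p t x0 x0) \<partial>lborel)"

definition beta_crit :: "(real \<Rightarrow> 'a \<Rightarrow> 'a \<Rightarrow> real) \<Rightarrow> 'a \<Rightarrow> real" where
  "beta_crit p x0 = (if green p x0 = \<infinity> then 1 else 1 / enn2real (green p x0) + 1)"

definition rate :: "(real \<Rightarrow> 'a \<Rightarrow> 'a \<Rightarrow> real) \<Rightarrow> 'a \<Rightarrow> real \<Rightarrow> real" where
  "rate p x0 m = (if m > beta_crit p x0
                 then (THE lam. laplace_ret p x0 lam = ennreal (1 / (m - 1)))
                 else 0)"

end

theory Submission
  imports Defs
begin

lemma has_sum_finsum:
  fixes g :: "'k \<Rightarrow> 'b \<Rightarrow> real"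
  assumes "finite K" "\<And>k. k \<in> K \<Longrightarrow> (g k has_sum s k) A"
  shows "((\<lambda>x. \<Sum>k\<in>K. g k x) has_sum (\<Sum>k\<in>K. s k)) A"
  using assms
proof (induction K rule: finite_induct)
  case empty then show ?case by simp
next
  case (insert k K)
  have "((\<lambda>x. g k x + (\<Sum>k\<in>K. g k x)) has_sum (s k + (\<Sum>k\<in>K. s k))) A"
    by (rule has_sum_add) (use insert in auto)
  then show ?case using insert by simp
qed

locale ctmc =
  fixes A :: "'a::countable \<Rightarrow> 'a \<Rightarrow> real" and p :: "real \<Rightarrow> 'a \<Rightarrow> 'a \<Rightarrow> real" and z0 :: 'a
  assumes irr: "irreducible_ctmc A p"
begin

lemma nonneg: "t \<ge> 0 \<Longrightarrow> p t x y \<ge> 0"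
  using irr unfolding irreducible_ctmc_def by blast
lemma rowsum: "t \<ge> 0 \<Longrightarrow> ((\<lambda>y. p t x y) has_sum 1) UNIV"
  using irr unfolding irreducible_ctmc_def by blast
lemma p0: "p 0 x y = (if x = y then 1 else 0)"
  using irr unfolding irreducible_ctmc_def by blast
lemma ck: "s \<ge> 0 \<Longrightarrow> t \<ge> 0 \<Longrightarrow> ((\<lambda>y. p s x y * p t y z) has_sum p (s + t) x z) UNIV"
  using irr unfolding irreducible_ctmc_def by blast
lemma deriv: "((\<lambda>t. p t x y) has_real_derivative A x y) (at_right 0)"
  using irr unfolding irreducible_ctmc_def by blast
lemma pos: "t > 0 \<Longrightarrow> p t x y > 0"
  using irr unfolding irreducible_ctmc_def by blast

lemma le1: assumes "t \<ge> 0" shows "p t x y \<le> 1"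
proof -
  have "((\<lambda>z. if z = y then p t x y else 0) has_sum p t x y) UNIV"
    by (rule has_sum_finite_neutralI[where B = "{y}"]) auto
  then show ?thesis
    by (rule has_sum_mono[OF _ rowsum[OF assms]]) (use nonneg[OF assms] in auto)
qed

lemma ck_lower: assumes "s \<ge> 0" "t \<ge> 0"
  shows "p s x y * p t y z \<le> p (s + t) x z"
proof -
  have "((\<lambda>w. if w = y then p s x y * p t y z else 0) has_sum p s x y * p t y z) UNIV"
    by (rule has_sum_finite_neutralI[where B = "{y}"]) auto
  then show ?thesis
    by (rule has_sum_mono[OF _ ck[OF assms]]) (use nonneg assms in auto)
qed

lemma modulus: assumes "s \<ge> 0" "t \<ge> 0"
  shows "\<bar>p (s + t) z0 z0 - p t z0 z0\<bar> \<le> 1 - p s z0 z0"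
proof -
  have lo: "p s z0 z0 * p t z0 z0 \<le> p (s + t) z0 z0" by (rule ck_lower[OF assms])
  have g: "((\<lambda>y. p s z0 y + (if y = z0 then p s z0 z0 * p t z0 z0 - p s z0 z0 else 0))
            has_sum (1 + (p s z0 z0 * p t z0 z0 - p s z0 z0))) UNIV"
    by (rule has_sum_add[OF rowsum[OF assms(1)]])
       (rule has_sum_finite_neutralI[where B = "{z0}"], auto)
  have up: "p (s + t) z0 z0 \<le> 1 + (p s z0 z0 * p t z0 z0 - p s z0 z0)"
  proof (rule has_sum_mono[OF ck[OF assms] g])
    fix y
    show "p s z0 y * p t y z0 \<le> p s z0 y + (if y = z0 then p s z0 z0 * p t z0 z0 - p s z0 z0 else 0)"
      using nonneg[OF assms(1), of z0 y] le1[OF assms(2), of y z0]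
      by (cases "y = z0") (auto simp: mult_left_le)
  qed
  have a: "0 \<le> p s z0 z0" "p s z0 z0 \<le> 1" "0 \<le> p t z0 z0" "p t z0 z0 \<le> 1"
    using nonneg le1 assms by auto
  have m1: "(1 - p s z0 z0) * (1 - p t z0 z0) \<ge> 0" using a by simp
  have m2: "p t z0 z0 * (1 - p s z0 z0) \<ge> 0" using a by simp
  have "p s z0 z0 * p t z0 z0 \<ge> p t z0 z0 - (1 - p s z0 z0)"
    using m1 by (simp add: algebra_simps)
  moreover have "1 + (p s z0 z0 * p t z0 z0 - p s z0 z0) - p t z0 z0 \<le> 1 - p s z0 z0"
    using m2 by (simp add: algebra_simps)
  ultimately show ?thesis using lo up by linarith
qed

lemma right_cont0: "((\<lambda>t. p t z0 z0) \<longlongrightarrow> 1) (at_right 0)"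
proof -
  have "continuous (at_right 0) (\<lambda>t. p t z0 z0)"
    using DERIV_continuous[OF deriv] .
  then show ?thesis by (simp add: continuous_within p0)
qed

lemma small: assumes "e > 0" obtains d where "d > 0" "\<And>s. 0 \<le> s \<Longrightarrow> s \<le> d \<Longrightarrow> 1 - p s z0 z0 \<le> e"
proof -
  from right_cont0 assms have "\<forall>\<^sub>F t in at_right 0. dist (p t z0 z0) 1 < e"
    by (rule tendstoD)
  then obtain d where d: "d > 0" "\<And>t. 0 < t \<Longrightarrow> t < d \<Longrightarrow> dist (p t z0 z0) 1 < e"
    unfolding eventually_at_right_field by auto
  show ?thesis
  proof (rule that[of "d/2"])
    show "d/2 > 0" using d by simp
    fix s assume "0 \<le> s" "s \<le> d/2"
    show "1 - p s z0 z0 \<le> e"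
    proof (cases "s = 0")
      case True then show ?thesis using assms by (simp add: p0)
    next
      case False
      then have "dist (p s z0 z0) 1 < e" using d \<open>0 \<le> s\<close> \<open>s \<le> d/2\<close> by auto
      then show ?thesis by (simp add: dist_real_def)
    qed
  qed
qed

lemma cont: "continuous_on {0..} (\<lambda>t. p t z0 z0)"
proof (rule continuous_on_iff[THEN iffD2], intro ballI allI impI)
  fix t e :: real assume t: "t \<in> {0..}" and e: "0 < e"
  obtain d where d: "d > 0" "\<And>s. 0 \<le> s \<Longrightarrow> s \<le> d \<Longrightarrow> 1 - p s z0 z0 \<le> e/2"
    using small[of "e/2"] e by auto
  show "\<exists>d>0. \<forall>x'\<in>{0..}. dist x' t < d \<longrightarrow> dist (p x' z0 z0) (p t z0 z0) < e"
  proof (intro exI conjI ballI impI)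
    show "d > 0" by fact
    fix x' :: real assume x': "x' \<in> {0..}" "dist x' t < d"
    show "dist (p x' z0 z0) (p t z0 z0) < e"
    proof (cases "x' \<ge> t")
      case True
      have "\<bar>p ((x' - t) + t) z0 z0 - p t z0 z0\<bar> \<le> 1 - p (x' - t) z0 z0"
        using True t by (intro modulus) auto
      also have "\<dots> \<le> e/2" using d True x' by (auto simp: dist_real_def)
      finally show ?thesis using e by (simp add: dist_real_def)
    next
      case False
      have "\<bar>p ((t - x') + x') z0 z0 - p x' z0 z0\<bar> \<le> 1 - p (t - x') z0 z0"
        using False x' by (intro modulus) auto
      also have "\<dots> \<le> e/2" using d False x' by (auto simp: dist_real_def)
      finally show ?thesis using e by (simp add: dist_real_def abs_minus_commute)
    qed
  qed
qed

end

context ctmc begin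

fun T :: "real \<Rightarrow> nat \<Rightarrow> 'a \<Rightarrow> 'a \<Rightarrow> real" where
  "T h 0 x y = (if x = y then 1 else 0)"
| "T h (Suc n) x y = (if y = z0 then 0 else (\<Sum>\<^sub>\<infinity>z. T h n x z * p h z y))"

fun Fr :: "real \<Rightarrow> nat \<Rightarrow> 'a \<Rightarrow> real" where
  "Fr h 0 x = 0"
| "Fr h (Suc n) x = (\<Sum>\<^sub>\<infinity>z. T h n x z * p h z z0)"

lemma T_nonneg: "h \<ge> 0 \<Longrightarrow> T h n x y \<ge> 0"
  by (induction n arbitrary: y) (auto intro!: infsum_nonneg mult_nonneg_nonneg nonneg)

lemma Fr_nonneg: "h \<ge> 0 \<Longrightarrow> Fr h k x \<ge> 0"
  by (cases k) (auto intro!: infsum_nonneg mult_nonneg_nonneg nonneg T_nonneg)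

lemma ckn: "h \<ge> 0 \<Longrightarrow> ((\<lambda>z. p (real m * h) x z * p h z y) has_sum p (real (Suc m) * h) x y) UNIV"
  using ck[of "real m * h" h x y] by (simp add: algebra_simps)

lemma decomp: assumes h: "h \<ge> 0"
  shows "p (real n * h) x y = T h n x y + (\<Sum>k\<in>{1..n}. Fr h k x * p (real (n - k) * h) z0 y)"
proof (induction n arbitrary: y)
  case 0 then show ?case by (simp add: p0)
next
  case (Suc n)
  define S where "S = (\<Sum>k\<in>{1..n}. Fr h k x * p (real (Suc (n - k)) * h) z0 y)"
  have eq: "p (real n * h) x z * p h z y = T h n x z * p h z y
      + (\<Sum>k\<in>{1..n}. Fr h k x * (p (real (n - k) * h) z0 z * p h z y))" for z
    by (subst Suc.IH) (simp add: distrib_right sum_distrib_right mult.assoc)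
  have bs: "((\<lambda>z. \<Sum>k\<in>{1..n}. Fr h k x * (p (real (n - k) * h) z0 z * p h z y)) has_sum S) UNIV"
    unfolding S_def by (intro has_sum_finsum has_sum_cmult_right ckn h) auto
  have Tle: "T h n x z \<le> p (real n * h) x z" for z
  proof -
    have "0 \<le> (\<Sum>k\<in>{1..n}. Fr h k x * p (real (n - k) * h) z0 z)"
      using h by (intro sum_nonneg mult_nonneg_nonneg Fr_nonneg nonneg) auto
    then show ?thesis using Suc.IH[of z] by linarith
  qed
  have asum: "(\<lambda>z. T h n x z * p h z y) summable_on UNIV"
    by (rule summable_on_comparison_test[OF has_sum_imp_summable[OF ckn[OF h, of n x y]]])
       (use Tle h T_nonneg nonneg in \<open>auto intro!: mult_right_mono mult_nonneg_nonneg\<close>)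
  have "((\<lambda>z. T h n x z * p h z y + (\<Sum>k\<in>{1..n}. Fr h k x * (p (real (n - k) * h) z0 z * p h z y)))
        has_sum ((\<Sum>\<^sub>\<infinity>z. T h n x z * p h z y) + S)) UNIV"
    by (rule has_sum_add[OF has_sum_infsum[OF asum] bs])
  then have main: "p (real (Suc n) * h) x y = (\<Sum>\<^sub>\<infinity>z. T h n x z * p h z y) + S"
    using has_sum_unique ckn[OF h, of n x y] eq by (metis (no_types, lifting) ext)
  have S2: "(\<Sum>k\<in>{1..Suc n}. Fr h k x * p (real (Suc n - k) * h) z0 y)
        = S + Fr h (Suc n) x * p 0 z0 y"
  proof -
    have "(\<Sum>k\<in>{1..n}. Fr h k x * p (real (Suc n - k) * h) z0 y) = S"
      unfolding S_def by (rule sum.cong) (auto simp: Suc_diff_le)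
    then show ?thesis by simp
  qed
  show ?case
    unfolding S2 main by (cases "y = z0") (simp_all add: p0)
qed

definition u :: "real \<Rightarrow> nat \<Rightarrow> real" where "u h n = p (real n * h) z0 z0"

lemma u0: "u h 0 = 1" by (simp add: u_def p0)
lemma u_nonneg: "h \<ge> 0 \<Longrightarrow> u h n \<ge> 0" by (simp add: u_def nonneg)
lemma u_le1: "h \<ge> 0 \<Longrightarrow> u h n \<le> 1" by (simp add: u_def le1)

lemma renewal: assumes "h \<ge> 0" "n \<ge> 1"
  shows "u h n = (\<Sum>k\<in>{1..n}. Fr h k z0 * u h (n - k))"
proof -
  obtain m where m: "n = Suc m" using assms by (cases n) auto
  show ?thesis using decomp[OF assms(1), of n z0 z0] unfolding u_def m by simp
qed

lemma Fr_le: assumes "h \<ge> 0" shows "Fr h k z0 \<le> u h k"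
proof (cases "k = 0")
  case True then show ?thesis by (simp add: u0)
next
  case False
  have "Fr h k z0 = Fr h k z0 * u h (k - k)" by (simp add: u0)
  also have "\<dots> \<le> (\<Sum>j\<in>{1..k}. Fr h j z0 * u h (k - j))"
    by (rule member_le_sum[where f = "\<lambda>j. Fr h j z0 * u h (k - j)"])
       (use False assms in \<open>auto intro!: mult_nonneg_nonneg Fr_nonneg u_nonneg\<close>)
  also have "\<dots> = u h k" using renewal[OF assms, of k] False by simp
  finally show ?thesis .
qed

lemma gen_fun: assumes h: "h \<ge> 0" and s: "0 \<le> s" "s < 1"
  shows "(\<Sum>n. u h n * s ^ n) * (1 - (\<Sum>k. Fr h k z0 * s ^ k)) = 1"
proof -
  have geo: "summable (\<lambda>n. s ^ n)" using s by (simp add: summable_geometric)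
  have su: "summable (\<lambda>n. norm (u h n * s ^ n))"
    by (rule summable_comparison_test'[OF geo]) (use s h u_nonneg u_le1 in \<open>auto simp: abs_mult intro!: mult_left_le_one_le\<close>)
  have sF: "summable (\<lambda>n. norm (Fr h n z0 * s ^ n))"
    by (rule summable_comparison_test'[OF geo])
       (use s h Fr_nonneg Fr_le u_le1 in \<open>auto simp: abs_mult intro!: mult_left_le_one_le order.trans[OF Fr_le]\<close>)
  have inner: "(\<Sum>i\<le>n. Fr h i z0 * s ^ i * (u h (n - i) * s ^ (n - i)))
       = u h n * s ^ n - (if n = 0 then 1 else 0)" for n
  proof -
    have "(\<Sum>i\<le>n. Fr h i z0 * s ^ i * (u h (n - i) * s ^ (n - i)))
        = (\<Sum>i\<le>n. Fr h i z0 * u h (n - i)) * s ^ n"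
    proof -
      have "(\<Sum>i\<le>n. Fr h i z0 * s ^ i * (u h (n - i) * s ^ (n - i)))
          = (\<Sum>i\<le>n. Fr h i z0 * u h (n - i) * s ^ n)"
      proof (rule sum.cong)
        fix i assume "i \<in> {..n}"
        then have "s ^ i * s ^ (n - i) = s ^ n" by (simp flip: power_add)
        then show "Fr h i z0 * s ^ i * (u h (n - i) * s ^ (n - i)) = Fr h i z0 * u h (n - i) * s ^ n"
          by (metis mult.assoc mult.left_commute)
      qed simp
      then show ?thesis by (simp add: sum_distrib_right)
    qed
    also have "(\<Sum>i\<le>n. Fr h i z0 * u h (n - i)) = (\<Sum>i\<in>{1..n}. Fr h i z0 * u h (n - i))"
      by (simp add: atMost_atLeast0 sum.atLeast_Suc_atMost)
    finally show ?thesis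
      by (cases "n = 0") (simp_all add: u0 renewal[OF h])
  qed
  have "(\<Sum>k. Fr h k z0 * s ^ k) * (\<Sum>n. u h n * s ^ n)
      = (\<Sum>n. \<Sum>i\<le>n. Fr h i z0 * s ^ i * (u h (n - i) * s ^ (n - i)))"
    by (rule Cauchy_product[OF sF su])
  also have "\<dots> = (\<Sum>n. u h n * s ^ n - (if n = 0 then 1 else 0))"
    by (simp only: inner)
  also have "\<dots> = (\<Sum>n. u h n * s ^ n) - (\<Sum>n. (if n = 0 then 1 else 0::real))"
    by (rule suminf_diff[symmetric]) (use summable_norm_cancel[OF su] sums_summable[OF sums_single[of 0 "\<lambda>_. 1::real"]] in auto)
  also have "(\<Sum>n. (if n = 0 then 1 else 0::real)) = 1"
    using sums_single[of 0 "\<lambda>_. 1::real"] sums_unique by fastforce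
  finally show ?thesis by (simp add: algebra_simps)
qed

end

context ctmc begin

lemma sF_summable: assumes "h \<ge> 0" "0 \<le> s" "s < 1"
  shows "summable (\<lambda>k. Fr h k z0 * s ^ k)"
proof -
  have geo: "summable (\<lambda>n. s ^ n)" using assms by (simp add: summable_geometric)
  show ?thesis
    by (rule summable_comparison_test'[OF geo])
       (use assms Fr_nonneg Fr_le u_le1 in \<open>auto simp: abs_mult intro!: mult_left_le_one_le order.trans[OF Fr_le]\<close>)
qed

lemma su_summable: assumes "h \<ge> 0" "0 \<le> s" "s < 1"
  shows "summable (\<lambda>n. u h n * s ^ n)"
proof -
  have geo: "summable (\<lambda>n. s ^ n)" using assms by (simp add: summable_geometric)
  show ?thesis
    by (rule summable_comparison_test'[OF geo]) (use assms u_nonneg u_le1 in \<open>auto simp: abs_mult intro!: mult_left_le_one_le\<close>)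
qed

definition Lh :: "real \<Rightarrow> real \<Rightarrow> real" where
  "Lh h l = h * (\<Sum>n. u h n * exp (- l * h) ^ n)"

definition Phi :: "real \<Rightarrow> real \<Rightarrow> real" where
  "Phi h l = (\<Sum>k. Fr h k z0 * exp (- l * h) ^ k)"

lemma Lh_pos_inv: assumes h: "h > 0" and l: "l > 0"
  shows "Lh h l > 0" "1 / Lh h l = (1 - Phi h l) / h"
proof -
  define s where "s = exp (- l * h)"
  have s: "0 \<le> s" "s < 1" using h l by (auto simp: s_def)
  define U where "U = (\<Sum>n. u h n * s ^ n)"
  have g: "U * (1 - Phi h l) = 1" using gen_fun[OF _ s] h unfolding U_def Phi_def s_def by simp
  have "U \<ge> 0" unfolding U_def using h s
    by (intro suminf_nonneg su_summable) (auto intro!: mult_nonneg_nonneg u_nonneg)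
  then have U: "U > 0" using g by (cases "U = 0") auto
  show "Lh h l > 0" using U h unfolding Lh_def U_def s_def by simp
  show "1 / Lh h l = (1 - Phi h l) / h" using g U h unfolding Lh_def U_def[symmetric] s_def[symmetric]
    by (simp add: field_simps)
qed

lemma Phi_convex: assumes h: "h > 0" shows "convex_on {0<..} (Phi h)"
  unfolding convex_on_def
proof (intro conjI ballI allI impI)
  show "convex {0::real<..}" by simp
  fix x y a b :: real assume x: "x \<in> {0<..}" and y: "y \<in> {0<..}" and ab: "0 \<le> a" "0 \<le> b" "a + b = 1"
  define c where "c = a * x + b * y"
  have c: "c > 0" using x y ab unfolding c_def
    by (cases "a = 0") (auto intro!: add_pos_nonneg mult_pos_pos)
  have sm: "summable (\<lambda>k. Fr h k z0 * exp (- z * h) ^ k)" if "z > 0" for z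
    using that h by (intro sF_summable) auto
  have trm: "Fr h k z0 * exp (- c * h) ^ k \<le> a * (Fr h k z0 * exp (- x * h) ^ k) + b * (Fr h k z0 * exp (- y * h) ^ k)" for k
  proof -
    have "exp (- c * h) ^ k = exp (a * (real k * (- x * h)) + b * (real k * (- y * h)))"
      unfolding c_def by (simp flip: exp_of_nat_mult add: algebra_simps)
    also have "\<dots> \<le> a * exp (real k * (- x * h)) + b * exp (real k * (- y * h))"
      using exp_convex ab unfolding convex_on_def by (metis UNIV_I real_scaleR_def)
    also have "\<dots> = a * exp (- x * h) ^ k + b * exp (- y * h) ^ k"
      by (simp flip: exp_of_nat_mult)
    finally have "Fr h k z0 * exp (- c * h) ^ k \<le> Fr h k z0 * (a * exp (- x * h) ^ k + b * exp (- y * h) ^ k)"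
      using Fr_nonneg h by (intro mult_left_mono) auto
    then show ?thesis by (simp add: algebra_simps)
  qed
  have "Phi h (a *\<^sub>R x + b *\<^sub>R y) = (\<Sum>k. Fr h k z0 * exp (- c * h) ^ k)"
    unfolding Phi_def c_def by simp
  also have "\<dots> \<le> (\<Sum>k. a * (Fr h k z0 * exp (- x * h) ^ k) + b * (Fr h k z0 * exp (- y * h) ^ k))"
    by (rule suminf_le[OF trm sm[OF c]])
       (intro summable_add summable_mult sm, use x y in auto)
  also have "\<dots> = a * Phi h x + b * Phi h y"
  proof -
    have s1: "summable (\<lambda>k. Fr h k z0 * exp (- x * h) ^ k)" using sm x by auto
    have s2: "summable (\<lambda>k. Fr h k z0 * exp (- y * h) ^ k)" using sm y by auto
    have "(\<Sum>k. a * (Fr h k z0 * exp (- x * h) ^ k) + b * (Fr h k z0 * exp (- y * h) ^ k))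
      = (\<Sum>k. a * (Fr h k z0 * exp (- x * h) ^ k)) + (\<Sum>k. b * (Fr h k z0 * exp (- y * h) ^ k))"
      by (rule suminf_add[symmetric]) (use s1 s2 summable_mult in auto)
    also have "\<dots> = a * Phi h x + b * Phi h y"
      unfolding Phi_def using suminf_mult[OF s1, of a] suminf_mult[OF s2, of b] by simp
    finally show ?thesis .
  qed
  finally show "Phi h (a *\<^sub>R x + b *\<^sub>R y) \<le> a * Phi h x + b * Phi h y" .
qed

lemma Lh_concave: assumes h: "h > 0" shows "concave_on {0<..} (\<lambda>l. 1 / Lh h l)"
  unfolding concave_on_iff
proof (intro conjI ballI allI impI)
  show "convex {0::real<..}" by simp
  fix x y a b :: real assume x: "x \<in> {0<..}" and y: "y \<in> {0<..}" and ab: "0 \<le> a" "0 \<le> b" "a + b = 1"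
  have z: "a *\<^sub>R x + b *\<^sub>R y \<in> {0<..}"
    using convex_def[THEN iffD1, OF convex_real_interval(3)[of 0]] x y ab by blast
  have cv: "Phi h (a *\<^sub>R x + b *\<^sub>R y) \<le> a * Phi h x + b * Phi h y"
    using Phi_convex[OF h] x y ab unfolding convex_on_def by blast
  have "a * ((1 - Phi h x) / h) + b * ((1 - Phi h y) / h) = (1 - (a * Phi h x + b * Phi h y)) / h"
  proof -
    have "a * ((1 - Phi h x) / h) + b * ((1 - Phi h y) / h) = (a * (1 - Phi h x) + b * (1 - Phi h y)) / h"
      by (simp add: add_divide_distrib)
    also have "a * (1 - Phi h x) + b * (1 - Phi h y) = (a + b) - (a * Phi h x + b * Phi h y)"
      by (simp add: algebra_simps)
    finally show ?thesis using ab by simp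
  qed
  also have "\<dots> \<le> (1 - Phi h (a *\<^sub>R x + b *\<^sub>R y)) / h"
    using cv h by (intro divide_right_mono) auto
  finally show "a * (1 / Lh h x) + b * (1 / Lh h y) \<le> 1 / Lh h (a *\<^sub>R x + b *\<^sub>R y)"
    using Lh_pos_inv(2)[OF h] x y z by simp
qed

end

context ctmc begin

definition g :: "real \<Rightarrow> real \<Rightarrow> real" where "g l t = exp (- l * t) * p t z0 z0"

definition Iv :: "real \<Rightarrow> nat \<Rightarrow> real set" where "Iv h n = {real n * h ..< real (Suc n) * h}"

definition E :: "real \<Rightarrow> real \<Rightarrow> real" where "E h l = h * (\<Sum>n. exp (- l * h) ^ n)"

lemma g_nonneg: "t \<ge> 0 \<Longrightarrow> g l t \<ge> 0" by (simp add: g_def nonneg)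

lemma g_meas: assumes "S \<in> sets borel" "S \<subseteq> {0..}"
  shows "(\<lambda>t. ennreal (g l t) * indicator S t) \<in> borel_measurable lborel"
proof -
  have c: "continuous_on S (g l)"
    unfolding g_def by (intro continuous_intros continuous_on_subset[OF cont assms(2)])
  have "(\<lambda>t. indicator S t *\<^sub>R g l t) \<in> borel_measurable borel"
    by (rule borel_measurable_continuous_on_indicator[OF assms(1) c])
  then have "(\<lambda>t. ennreal (indicator S t *\<^sub>R g l t)) \<in> borel_measurable borel"
    by measurable
  moreover have "(\<lambda>t. ennreal (indicator S t *\<^sub>R g l t)) = (\<lambda>t. ennreal (g l t) * indicator S t)"
    by (rule ext) (simp add: indicator_mult_ennreal mult.commute)
  ultimately show ?thesis by simp
qed

lemma Iv_sub: "h > 0 \<Longrightarrow> Iv h n \<subseteq> {0..}"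
  by (auto simp: Iv_def intro: order.trans[rotated])

lemma Iv_iff: assumes h: "h > 0" and t: "t \<ge> 0"
  shows "t \<in> Iv h n \<longleftrightarrow> n = nat \<lfloor>t / h\<rfloor>"
proof -
  have "t \<in> Iv h n \<longleftrightarrow> real n \<le> t / h \<and> t / h < real n + 1"
    using h by (auto simp: Iv_def field_simps)
  also have "\<dots> \<longleftrightarrow> \<lfloor>t / h\<rfloor> = int n"
    by (simp add: floor_eq_iff)
  also have "\<dots> \<longleftrightarrow> n = nat \<lfloor>t / h\<rfloor>"
    using h t by auto
  finally show ?thesis .
qed

lemma split_sum: assumes h: "h > 0"
  shows "(\<integral>\<^sup>+ t\<in>{0..}. ennreal (g l t) \<partial>lborel) = (\<Sum>n. \<integral>\<^sup>+ t. ennreal (g l t) * indicator (Iv h n) t \<partial>lborel)"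
proof -
  have pw: "ennreal (g l t) * indicator {0..} t = (\<Sum>n. ennreal (g l t) * indicator (Iv h n) t)" for t
  proof (cases "t \<ge> 0")
    case True
    have "(\<lambda>n. ennreal (g l t) * indicator (Iv h n) t) = (\<lambda>n. if n = nat \<lfloor>t / h\<rfloor> then ennreal (g l t) else 0)"
      using Iv_iff[OF h True] by (auto simp: indicator_def)
    moreover have "(\<lambda>n. if n = nat \<lfloor>t / h\<rfloor> then ennreal (g l t) else 0) sums ennreal (g l t)"
      using sums_single[of "nat \<lfloor>t / h\<rfloor>" "\<lambda>_. ennreal (g l t)"] by simp
    ultimately show ?thesis using True by (simp add: sums_unique)
  next
    case False
    then have "t \<notin> Iv h n" for n using Iv_sub[OF h] by auto
    then show ?thesis using False by simp
  qed
  show ?thesis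
    unfolding pw
    by (rule nn_integral_suminf) (use g_meas Iv_sub[OF h] in \<open>auto simp: Iv_def\<close>)
qed

lemma int_const_Iv: assumes h: "h > 0"
  shows "(\<integral>\<^sup>+ t. ennreal c * indicator (Iv h n) t \<partial>lborel) = ennreal (c * h)"
proof -
  have "emeasure lborel (Iv h n) = ennreal h"
    using h unfolding Iv_def by (simp add: algebra_simps)
  then show ?thesis
    using h by (subst nn_integral_cmult_indicator) (auto simp: Iv_def ennreal_mult'')
qed

lemma geo_summable: fixes h l :: real assumes "h > 0" "l > 0" shows "summable (\<lambda>n. exp (- l * h) ^ n)"
  using summable_geometric[of "exp (- l * h)"] assms by simp

lemma approx_upper:
  assumes h: "h > 0" and l: "l > 0" and eps: "\<And>s. 0 \<le> s \<Longrightarrow> s \<le> h \<Longrightarrow> 1 - p s z0 z0 \<le> e"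
  shows "laplace_ret p z0 l \<le> ennreal (Lh h l + e * E h l)"
proof -
  have e0: "e \<ge> 0" using eps[of 0] h by (simp add: p0)
  define q where "q = exp (- l * h)"
  have q: "0 \<le> q" "q < 1" using h l by (auto simp: q_def)
  have pt: "g l t \<le> q ^ n * (u h n + e)" if t: "t \<in> Iv h n" for n t
  proof -
    have t1: "real n * h \<le> t" "t < real n * h + h" using t by (auto simp: Iv_def algebra_simps)
    have t0: "0 \<le> real n * h" using h by simp
    have "\<bar>p ((t - real n * h) + real n * h) z0 z0 - p (real n * h) z0 z0\<bar> \<le> 1 - p (t - real n * h) z0 z0"
      using t1 t0 by (intro modulus) auto
    also have "\<dots> \<le> e" using t1 by (intro eps) auto
    finally have a: "p t z0 z0 \<le> u h n + e" unfolding u_def by simp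
    have b: "exp (- l * t) \<le> q ^ n"
      unfolding q_def using t1 l by (simp flip: exp_of_nat_mult)
    have "g l t = exp (- l * t) * p t z0 z0" by (simp add: g_def)
    also have "\<dots> \<le> q ^ n * (u h n + e)"
      using a b t0 t1 q nonneg[of t z0 z0] order.trans[OF t0 t1(1)] by (intro mult_mono) auto
    finally show ?thesis .
  qed
  have per: "(\<integral>\<^sup>+ t. ennreal (g l t) * indicator (Iv h n) t \<partial>lborel) \<le> ennreal (q ^ n * (u h n + e) * h)" for n
  proof -
    have "(\<integral>\<^sup>+ t. ennreal (g l t) * indicator (Iv h n) t \<partial>lborel)
        \<le> (\<integral>\<^sup>+ t. ennreal (q ^ n * (u h n + e)) * indicator (Iv h n) t \<partial>lborel)"
      by (rule nn_integral_mono) (auto simp: indicator_def pt ennreal_leI)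
    also have "\<dots> = ennreal (q ^ n * (u h n + e) * h)" by (rule int_const_Iv[OF h])
    finally show ?thesis .
  qed
  have s1: "summable (\<lambda>n. u h n * q ^ n)" using su_summable[of h q] h q by auto
  have s2: "summable (\<lambda>n. q ^ n)" using q by (simp add: summable_geometric)
  have sums: "(\<lambda>n. q ^ n * (u h n + e) * h) sums (Lh h l + e * E h l)"
  proof -
    have "(\<lambda>n. h * (u h n * q ^ n) + e * (h * q ^ n)) sums (h * (\<Sum>n. u h n * q ^ n) + e * (h * (\<Sum>n. q ^ n)))"
      by (intro sums_add sums_mult summable_sums s1 s2)
    then show ?thesis unfolding Lh_def E_def q_def[symmetric] by (simp add: algebra_simps)
  qed
  have "laplace_ret p z0 l = (\<Sum>n. \<integral>\<^sup>+ t. ennreal (g l t) * indicator (Iv h n) t \<partial>lborel)"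
    unfolding laplace_ret_def g_def[symmetric] by (rule split_sum[OF h])
  also have "\<dots> \<le> (\<Sum>n. ennreal (q ^ n * (u h n + e) * h))"
    by (intro suminf_le per) auto
  also have "\<dots> = ennreal (Lh h l + e * E h l)"
    by (rule suminf_ennreal_eq[OF _ sums]) (use q h e0 u_nonneg in \<open>auto intro!: mult_nonneg_nonneg add_nonneg_nonneg\<close>)
  finally show ?thesis .
qed

lemma approx_lower:
  assumes h: "h > 0" and l: "l > 0" and eps: "\<And>s. 0 \<le> s \<Longrightarrow> s \<le> h \<Longrightarrow> 1 - p s z0 z0 \<le> e"
  shows "ennreal (Lh h l) \<le> ennreal (exp (l * h)) * laplace_ret p z0 l + ennreal (e * E h l)"
proof -
  have e0: "e \<ge> 0" using eps[of 0] h by (simp add: p0)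
  define q where "q = exp (- l * h)"
  have q: "0 \<le> q" "q < 1" using h l by (auto simp: q_def)
  have pt: "q ^ n * u h n \<le> exp (l * h) * g l t + q ^ n * e" if t: "t \<in> Iv h n" for n t
  proof -
    have t1: "real n * h \<le> t" "t < real n * h + h" using t by (auto simp: Iv_def algebra_simps)
    have t0: "0 \<le> real n * h" using h by simp
    have "\<bar>p ((t - real n * h) + real n * h) z0 z0 - p (real n * h) z0 z0\<bar> \<le> 1 - p (t - real n * h) z0 z0"
      using t1 t0 by (intro modulus) auto
    also have "\<dots> \<le> e" using t1 by (intro eps) auto
    finally have a: "u h n \<le> p t z0 z0 + e" unfolding u_def by simp
    have "q ^ n = exp (- l * (real n * h))"
      unfolding q_def by (simp flip: exp_of_nat_mult add: algebra_simps)
    also have "\<dots> \<le> exp (l * h + - l * t)"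
    proof -
      have "l * t \<le> l * (real n * h + h)" using t1 l by (intro mult_left_mono) auto
      then show ?thesis by (simp add: algebra_simps)
    qed
    also have "\<dots> = exp (l * h) * exp (- l * t)" by (simp only: exp_add)
    finally have b: "q ^ n \<le> exp (l * h) * exp (- l * t)" .
    have "q ^ n * u h n \<le> q ^ n * (p t z0 z0 + e)"
      using a q by (intro mult_left_mono) auto
    also have "\<dots> = q ^ n * p t z0 z0 + q ^ n * e" by (simp add: algebra_simps)
    also have "\<dots> \<le> exp (l * h) * exp (- l * t) * p t z0 z0 + q ^ n * e"
      using b t0 t1 nonneg[of t] order.trans[OF t0 t1(1)] by (intro add_right_mono mult_right_mono) auto
    finally show ?thesis by (simp add: g_def mult.assoc)
  qed
  have meas: "(\<lambda>t. ennreal (g l t) * indicator (Iv h n) t) \<in> borel_measurable lborel" for n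
    using g_meas Iv_sub[OF h] by (auto simp: Iv_def)
  have per: "ennreal (q ^ n * u h n * h) \<le> ennreal (exp (l * h)) * (\<integral>\<^sup>+ t. ennreal (g l t) * indicator (Iv h n) t \<partial>lborel)
             + ennreal (q ^ n * e * h)" for n
  proof -
    have "ennreal (q ^ n * u h n * h) = (\<integral>\<^sup>+ t. ennreal (q ^ n * u h n) * indicator (Iv h n) t \<partial>lborel)"
      by (rule int_const_Iv[OF h, symmetric])
    also have "\<dots> \<le> (\<integral>\<^sup>+ t. ennreal (exp (l * h)) * (ennreal (g l t) * indicator (Iv h n) t)
                      + ennreal (q ^ n * e) * indicator (Iv h n) t \<partial>lborel)"
    proof (rule nn_integral_mono)
      fix t
      show "ennreal (q ^ n * u h n) * indicator (Iv h n) t \<le> ennreal (exp (l * h)) * (ennreal (g l t) * indicator (Iv h n) t)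
                      + ennreal (q ^ n * e) * indicator (Iv h n) t"
      proof (cases "t \<in> Iv h n")
        case True
        have t0: "t \<ge> 0" using True Iv_sub[OF h] by auto
        have "ennreal (q ^ n * u h n) \<le> ennreal (exp (l * h) * g l t + q ^ n * e)"
          using pt[OF True] by (rule ennreal_leI)
        also have "\<dots> = ennreal (exp (l * h)) * ennreal (g l t) + ennreal (q ^ n * e)"
          using g_nonneg[OF t0] q e0 by (simp add: ennreal_plus ennreal_mult)
        finally show ?thesis using True by simp
      qed simp
    qed
    also have "\<dots> = ennreal (exp (l * h)) * (\<integral>\<^sup>+ t. ennreal (g l t) * indicator (Iv h n) t \<partial>lborel)
             + (\<integral>\<^sup>+ t. ennreal (q ^ n * e) * indicator (Iv h n) t \<partial>lborel)"
      using meas by (subst nn_integral_add) (auto simp: nn_integral_cmult Iv_def)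
    also have "(\<integral>\<^sup>+ t. ennreal (q ^ n * e) * indicator (Iv h n) t \<partial>lborel) = ennreal (q ^ n * e * h)"
      by (rule int_const_Iv[OF h])
    finally show ?thesis .
  qed
  have s1: "summable (\<lambda>n. u h n * q ^ n)" using su_summable[of h q] h q by auto
  have s2: "summable (\<lambda>n. q ^ n)" using q by (simp add: summable_geometric)
  have sA: "(\<lambda>n. q ^ n * u h n * h) sums Lh h l"
  proof -
    have "(\<lambda>n. h * (u h n * q ^ n)) sums (h * (\<Sum>n. u h n * q ^ n))"
      by (intro sums_mult summable_sums s1)
    then show ?thesis unfolding Lh_def q_def[symmetric] by (simp add: algebra_simps)
  qed
  have sB: "(\<lambda>n. q ^ n * e * h) sums (e * E h l)"
  proof -
    have "(\<lambda>n. e * (h * q ^ n)) sums (e * (h * (\<Sum>n. q ^ n)))"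
      by (intro sums_mult summable_sums s2)
    then show ?thesis unfolding E_def q_def[symmetric] by (simp add: algebra_simps)
  qed
  have "ennreal (Lh h l) = (\<Sum>n. ennreal (q ^ n * u h n * h))"
    by (rule suminf_ennreal_eq[OF _ sA, symmetric]) (use q h u_nonneg in \<open>auto intro!: mult_nonneg_nonneg\<close>)
  also have "\<dots> \<le> (\<Sum>n. ennreal (exp (l * h)) * (\<integral>\<^sup>+ t. ennreal (g l t) * indicator (Iv h n) t \<partial>lborel)
             + ennreal (q ^ n * e * h))"
    by (intro suminf_le per) auto
  also have "\<dots> = ennreal (exp (l * h)) * (\<Sum>n. \<integral>\<^sup>+ t. ennreal (g l t) * indicator (Iv h n) t \<partial>lborel)
             + (\<Sum>n. ennreal (q ^ n * e * h))"
    by (subst suminf_add[symmetric, OF summableI summableI]) simp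
  also have "(\<Sum>n. ennreal (q ^ n * e * h)) = ennreal (e * E h l)"
    by (rule suminf_ennreal_eq[OF _ sB]) (use q h e0 in \<open>auto intro!: mult_nonneg_nonneg\<close>)
  also have "(\<Sum>n. \<integral>\<^sup>+ t. ennreal (g l t) * indicator (Iv h n) t \<partial>lborel) = laplace_ret p z0 l"
    unfolding laplace_ret_def g_def[symmetric] by (rule split_sum[OF h, symmetric])
  finally show ?thesis .
qed

end

context ctmc begin

definition Lr :: "real \<Rightarrow> real" where "Lr l = enn2real (laplace_ret p z0 l)"

lemma E_bound: assumes h: "h > 0" and l: "l > 0" shows "E h l \<le> 1 / l + h" "E h l \<ge> 0"
proof -
  define q where "q = exp (- l * h)"
  have q: "0 < q" "q < 1" using h l by (auto simp: q_def)
  have E: "E h l = h / (1 - q)" unfolding E_def q_def[symmetric]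
    using suminf_geometric[of q] q by simp
  have "1 + l * h \<le> exp (l * h)" by (rule exp_ge_add_one_self)
  moreover have "q * exp (l * h) = 1" unfolding q_def by (simp add: exp_minus_inverse mult.commute)
  ultimately have "q * (1 + l * h) \<le> 1" using q by (metis mult_left_mono less_imp_le)
  then have "h \<le> (1 / l + h) * (1 - q)" using l h q by (simp add: field_simps)
  then show "E h l \<le> 1 / l + h" unfolding E using q by (simp add: divide_le_eq)
  show "E h l \<ge> 0" unfolding E using q h by simp
qed

lemma Lh_le_E: assumes h: "h > 0" and l: "l > 0" shows "Lh h l \<le> E h l" "Lh h l \<ge> 0"
proof -
  define q where "q = exp (- l * h)"
  have q: "0 < q" "q < 1" using h l by (auto simp: q_def)
  have "(\<Sum>n. u h n * q ^ n) \<le> (\<Sum>n. q ^ n)"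
    by (rule suminf_le) (use q h su_summable[of h q] u_le1 summable_geometric[of q] in \<open>auto intro!: mult_left_le_one_le\<close>)
  then show "Lh h l \<le> E h l" unfolding Lh_def E_def q_def[symmetric] using h by simp
  show "Lh h l \<ge> 0" using Lh_pos_inv(1)[OF h l] by simp
qed

lemma small_ex: assumes "e > 0" shows "\<exists>d>0. \<forall>s. 0 \<le> s \<longrightarrow> s \<le> d \<longrightarrow> 1 - p s z0 z0 \<le> e"
  using small[OF assms] by metis

lemma lap_fin: assumes l: "l > 0" shows "laplace_ret p z0 l = ennreal (Lr l)" "Lr l \<ge> 0"
proof -
  obtain d where d: "d > 0" "\<And>s. 0 \<le> s \<Longrightarrow> s \<le> d \<Longrightarrow> 1 - p s z0 z0 \<le> 1" using small[of 1] by auto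
  have "laplace_ret p z0 l \<le> ennreal (Lh d l + 1 * E d l)" by (rule approx_upper[OF d(1) l d(2)])
  then have "laplace_ret p z0 l < top" using ennreal_less_top le_less_trans by blast
  then show "laplace_ret p z0 l = ennreal (Lr l)" unfolding Lr_def by simp
  show "Lr l \<ge> 0" unfolding Lr_def by simp
qed

lemma ineqA: assumes h: "h > 0" and l: "l > 0" and eps: "\<And>s. 0 \<le> s \<Longrightarrow> s \<le> h \<Longrightarrow> 1 - p s z0 z0 \<le> e"
  shows "Lr l \<le> Lh h l + e * E h l"
proof -
  have e0: "e \<ge> 0" using eps[of 0] h by (simp add: p0)
  have "ennreal (Lr l) \<le> ennreal (Lh h l + e * E h l)" using approx_upper[OF h l eps] lap_fin(1)[OF l] by (simp only:)
  moreover have nn: "0 \<le> Lh h l + e * E h l" using Lh_le_E[OF h l] E_bound[OF h l] e0 by simp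
  ultimately show ?thesis using ennreal_le_iff[OF nn] by blast
qed

lemma ineqB: assumes h: "h > 0" and l: "l > 0" and eps: "\<And>s. 0 \<le> s \<Longrightarrow> s \<le> h \<Longrightarrow> 1 - p s z0 z0 \<le> e"
  shows "Lh h l \<le> exp (l * h) * Lr l + e * E h l"
proof -
  have e0: "e \<ge> 0" using eps[of 0] h by (simp add: p0)
  have "ennreal (Lh h l) \<le> ennreal (exp (l * h)) * ennreal (Lr l) + ennreal (e * E h l)"
    using approx_lower[OF h l eps] lap_fin[OF l] by simp
  also have "\<dots> = ennreal (exp (l * h) * Lr l + e * E h l)"
    using lap_fin(2)[OF l] E_bound[OF h l] e0 by (simp add: ennreal_mult ennreal_plus)
  finally show ?thesis using lap_fin(2)[OF l] E_bound[OF h l] e0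
    by (subst (asm) ennreal_le_iff) auto
qed

lemma lap_lower: assumes l: "l > 0" and d: "d > 0" and e1: "e \<le> 1"
  and eps: "\<And>s. 0 \<le> s \<Longrightarrow> s \<le> d \<Longrightarrow> 1 - p s z0 z0 \<le> e"
  shows "(1 - e) * (1 - exp (- l * d)) / l \<le> Lr l"
proof -
  define f where "f t = (1 - e) * exp (- l * t)" for t
  define F where "F t = - (1 - e) * exp (- l * t) / l" for t
  have der: "(F has_vector_derivative f t) (at t within {0..d})" for t
  proof -
    have "(F has_real_derivative f t) (at t within {0..d})"
      unfolding F_def f_def using l
      by (auto intro!: derivative_eq_intros simp: field_simps)
    then show ?thesis by (simp add: has_real_derivative_iff_has_vector_derivative)
  qed
  have hi: "(f has_integral (F d - F 0)) {0..d}"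
    by (rule fundamental_theorem_of_calculus) (use d der in auto)
  have FF: "F d - F 0 = (1 - e) * (1 - exp (- l * d)) / l"
    unfolding F_def using l by (simp add: field_simps)
  have "ennreal ((1 - e) * (1 - exp (- l * d)) / l) = (\<integral>\<^sup>+ t. ennreal (indicator {0..d} t * f t) \<partial>lborel)"
    using nn_integral_has_integral_lebesgue[OF _ hi] e1 unfolding FF f_def by simp
  also have "\<dots> \<le> laplace_ret p z0 l"
    unfolding laplace_ret_def
  proof (rule nn_integral_mono)
    fix t
    show "ennreal (indicator {0..d} t * f t) \<le> ennreal (exp (- l * t) * p t z0 z0) * indicator {0..} t"
    proof (cases "t \<in> {0..d}")
      case True
      then have "1 - e \<le> p t z0 z0" using eps[of t] by auto
      then have "f t \<le> exp (- l * t) * p t z0 z0" unfolding f_def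
        by (simp add: mult.commute)
      then show ?thesis using True by (auto intro: ennreal_leI)
    qed simp
  qed
  also have "\<dots> = ennreal (Lr l)" by (rule lap_fin[OF l])
  finally show ?thesis using lap_fin(2)[OF l] by (simp add: ennreal_le_iff)
qed

lemma Lr_pos: assumes l: "l > 0" shows "Lr l > 0"
proof -
  obtain d where d: "d > 0" "\<And>s. 0 \<le> s \<Longrightarrow> s \<le> d \<Longrightarrow> 1 - p s z0 z0 \<le> 1/2" using small[of "1/2"] by auto
  have "(1 - 1/2) * (1 - exp (- l * d)) / l \<le> Lr l" by (rule lap_lower[OF l d(1) _ d(2)]) auto
  moreover have "(1 - 1/2) * (1 - exp (- l * d)) / l > 0" using l d by simp
  ultimately show ?thesis by linarith
qed

lemma Lh_tendsto: assumes l: "l > 0" shows "((\<lambda>h. Lh h l) \<longlongrightarrow> Lr l) (at_right 0)"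
proof (rule tendstoI)
  fix \<epsilon> :: real assume \<epsilon>: "\<epsilon> > 0"
  define e where "e = \<epsilon> / (2 * (1 / l + 1))"
  have e: "e > 0" unfolding e_def using \<epsilon> l by (intro divide_pos_pos mult_pos_pos add_pos_pos) auto
  obtain d where d: "d > 0" "\<And>s. 0 \<le> s \<Longrightarrow> s \<le> d \<Longrightarrow> 1 - p s z0 z0 \<le> e" using small[OF e] by auto
  have "((\<lambda>h. (exp (l * h) - 1) * Lr l) \<longlongrightarrow> (exp (l * 0) - 1) * Lr l) (at_right 0)"
    by (intro tendsto_intros)
  then have ev1: "\<forall>\<^sub>F h in at_right 0. (exp (l * h) - 1) * Lr l < \<epsilon> / 2"
    using \<epsilon> by (auto dest: order_tendstoD(2)[where a = "\<epsilon>/2"])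
  have ev2: "\<forall>\<^sub>F h in at_right (0::real). 0 < h \<and> h < min d 1"
    unfolding eventually_at_right_field by (rule exI[of _ "min d 1"]) (use d(1) in auto)
  show "\<forall>\<^sub>F h in at_right 0. dist (Lh h l) (Lr l) < \<epsilon>"
    using ev1 ev2
  proof eventually_elim
    case (elim h)
    then have h: "h > 0" "h \<le> d" "h \<le> 1" by auto
    have eps: "\<And>s. 0 \<le> s \<Longrightarrow> s \<le> h \<Longrightarrow> 1 - p s z0 z0 \<le> e" using d(2) h by auto
    have A: "Lr l \<le> Lh h l + e * E h l" by (rule ineqA[OF h(1) l eps])
    have B: "Lh h l \<le> exp (l * h) * Lr l + e * E h l" by (rule ineqB[OF h(1) l eps])
    have EE: "e * E h l \<le> e * (1 / l + 1)" using E_bound[OF h(1) l] h e by (intro mult_left_mono) auto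
    have ee: "e * (1 / l + 1) = \<epsilon> / 2"
    proof -
      define w where "w = 1 / l + 1"
      have "w > 0" using l by (simp add: w_def add_pos_pos)
      then show ?thesis unfolding e_def w_def[symmetric] by (simp add: field_simps)
    qed
    have ex: "exp (l * h) \<ge> 1" using l h by simp
    have g0: "(exp (l * h) - 1) * Lr l \<ge> 0" using ex lap_fin(2)[OF l] by simp
    have ex2: "(exp (l * h) - 1) * Lr l = exp (l * h) * Lr l - Lr l" by (simp add: algebra_simps)
    have "Lh h l - Lr l < \<epsilon>" "Lr l - Lh h l < \<epsilon>"
      using A B EE ee elim(1) g0 ex2 \<epsilon> by linarith+
    then show ?case unfolding dist_real_def abs_less_iff by linarith
  qed
qed

lemma Lr_le: assumes l: "l > 0" shows "Lr l \<le> 1 / l"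
proof -
  have ev: "\<forall>\<^sub>F e in at_right (0::real). Lr l \<le> (1 + e) * (1 / l + e)"
    unfolding eventually_at_right_field
  proof (intro exI[of _ 1] conjI allI impI)
    fix e :: real assume e: "0 < e" "e < 1"
    obtain d where d: "d > 0" "\<And>s. 0 \<le> s \<Longrightarrow> s \<le> d \<Longrightarrow> 1 - p s z0 z0 \<le> e" using small[OF e(1)] by auto
    define h where "h = min d e"
    have h: "h > 0" "h \<le> e" using d e by (auto simp: h_def)
    have eps: "\<And>s. 0 \<le> s \<Longrightarrow> s \<le> h \<Longrightarrow> 1 - p s z0 z0 \<le> e" using d(2) by (auto simp: h_def)
    have "Lr l \<le> Lh h l + e * E h l" by (rule ineqA[OF h(1) l eps])
    also have "\<dots> \<le> (1 + e) * E h l" using Lh_le_E[OF h(1) l] by (simp add: algebra_simps)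
    also have "\<dots> \<le> (1 + e) * (1 / l + e)"
      using E_bound[OF h(1) l] h e by (intro mult_left_mono) auto
    finally show "Lr l \<le> (1 + e) * (1 / l + e)" .
  qed simp
  have lim: "((\<lambda>e. (1 + e) * (1 / l + e)) \<longlongrightarrow> (1 + 0) * (1 / l + 0)) (at_right 0)"
    by (intro tendsto_intros)
  have "Lr l \<le> (1 + 0) * (1 / l + 0)" by (rule tendsto_le[OF _ lim tendsto_const ev]) simp
  then show ?thesis by simp
qed

lemma M_concave: "concave_on {0<..} (\<lambda>l. 1 / Lr l)"
  unfolding concave_on_iff
proof (intro conjI ballI allI impI)
  show "convex {0::real<..}" by simp
  fix x y a b :: real assume x: "x \<in> {0<..}" and y: "y \<in> {0<..}" and ab: "0 \<le> a" "0 \<le> b" "a + b = 1"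
  have z: "a *\<^sub>R x + b *\<^sub>R y \<in> {0<..}"
    using convex_def[THEN iffD1, OF convex_real_interval(3)[of 0]] x y ab by blast
  define z where "z = a *\<^sub>R x + b *\<^sub>R y"
  have lim: "((\<lambda>h. 1 / Lh h w) \<longlongrightarrow> 1 / Lr w) (at_right 0)" if "w > 0" for w
    using Lh_tendsto[OF that] Lr_pos[OF that] by (intro tendsto_intros) auto
  have L1: "((\<lambda>h. a * (1 / Lh h x) + b * (1 / Lh h y)) \<longlongrightarrow> a * (1 / Lr x) + b * (1 / Lr y)) (at_right 0)"
  proof -
    have x0: "x > 0" and y0: "y > 0" using x y by auto
    show ?thesis using tendsto_add[OF tendsto_mult_left[OF lim[OF x0]] tendsto_mult_left[OF lim[OF y0]]] .
  qed
  have z0: "z > 0" using z unfolding z_def by simp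
  have L2: "((\<lambda>h. 1 / Lh h z) \<longlongrightarrow> 1 / Lr z) (at_right 0)" by (rule lim[OF z0])
  have ev: "\<forall>\<^sub>F h in at_right (0::real). a * (1 / Lh h x) + b * (1 / Lh h y) \<le> 1 / Lh h z"
    unfolding eventually_at_right_field
  proof (intro exI[of _ 1] conjI allI impI)
    fix h :: real assume h: "0 < h" "h < 1"
    show "a * (1 / Lh h x) + b * (1 / Lh h y) \<le> 1 / Lh h z"
    proof -
      have c: "concave_on {0<..} (\<lambda>l. 1 / Lh h l)" using Lh_concave h(1) by blast
      have "\<forall>x\<in>{0<..}. \<forall>y\<in>{0<..}. \<forall>u\<ge>0. \<forall>v\<ge>0. u + v = 1 \<longrightarrow> u * (1 / Lh h x) + v * (1 / Lh h y) \<le> 1 / Lh h (u *\<^sub>R x + v *\<^sub>R y)"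
        using c unfolding concave_on_iff by blast
      then show ?thesis unfolding z_def using x y ab by blast
    qed
  qed simp
  have "a * (1 / Lr x) + b * (1 / Lr y) \<le> 1 / Lr z"
    by (rule tendsto_le[OF _ L2 L1 ev]) simp
  then show "a * (1 / Lr x) + b * (1 / Lr y) \<le> 1 / Lr (a *\<^sub>R x + b *\<^sub>R y)" unfolding z_def .
qed

end

context ctmc begin

lemma M_cont: "continuous_on {0<..} (\<lambda>l. 1 / Lr l)"
proof -
  have "continuous_on {0<..} (\<lambda>l. - (1 / Lr l))"
    using M_concave unfolding concave_on_def by (intro convex_on_continuous) auto
  then have "continuous_on {0<..} (\<lambda>l. - (- (1 / Lr l)))" by (rule continuous_on_minus)
  then show ?thesis by simp
qed

lemma M_ge: assumes "l > 0" shows "l \<le> 1 / Lr l"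
proof -
  have "Lr l \<le> 1 / l" "Lr l > 0" using Lr_le[OF assms] Lr_pos[OF assms] by auto
  then show ?thesis using assms by (simp add: le_divide_eq mult.commute pos_le_divide_eq)
qed

lemma M_pos: "l > 0 \<Longrightarrow> 1 / Lr l > 0" using Lr_pos by simp

lemma M_strict: assumes a: "0 < a" and ab: "a < b" shows "1 / Lr a < 1 / Lr b"
proof (rule ccontr)
  assume "\<not> 1 / Lr a < 1 / Lr b"
  then have ge: "1 / Lr b \<le> 1 / Lr a" by simp
  define c where "c = max (1 / Lr b) b + 1"
  have bc: "b < c" unfolding c_def by simp
  define t where "t = (b - a) / (c - a)"
  have t: "0 \<le> t" "t \<le> 1" "t > 0" using a ab bc by (auto simp: t_def)
  have bt: "(1 - t) *\<^sub>R a + t *\<^sub>R c = b"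
  proof -
    have "t * (c - a) = b - a" using a ab bc by (simp add: t_def)
    then show ?thesis by (simp add: algebra_simps)
  qed
  have "(1 - t) * (1 / Lr a) + t * (1 / Lr c) \<le> 1 / Lr ((1 - t) *\<^sub>R a + t *\<^sub>R c)"
    by (rule concave_onD[OF M_concave t(1) t(2)]) (use a ab bc in auto)
  then have "(1 - t) * (1 / Lr a) + t * (1 / Lr c) \<le> 1 / Lr b" unfolding bt .
  moreover have "(1 - t) * (1 / Lr b) \<le> (1 - t) * (1 / Lr a)" using ge t by (intro mult_left_mono) auto
  moreover have "(1 - t) * (1 / Lr b) = 1 / Lr b - t * (1 / Lr b)" by (simp only: left_diff_distrib mult_1_left)
  moreover have "(1 - t) * (1 / Lr a) = 1 / Lr a - t * (1 / Lr a)" by (simp only: left_diff_distrib mult_1_left)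
  ultimately have "t * (1 / Lr c) \<le> t * (1 / Lr b)" by linarith
  then have "1 / Lr c \<le> 1 / Lr b" by (rule mult_le_cancel_left_pos[OF t(3), THEN iffD1])
  moreover have "c \<le> 1 / Lr c" using M_ge[of c] a ab bc by simp
  ultimately show False unfolding c_def by simp
qed

lemma M_inj: assumes "0 < a" "0 < b" "1 / Lr a = 1 / Lr b" shows "a = b"
proof (rule ccontr)
  assume "a \<noteq> b"
  then consider "a < b" | "b < a" by linarith
  then show False
  proof cases
    case 1 then show ?thesis using M_strict[OF assms(1) 1] assms(3) by simp
  next
    case 2 then show ?thesis using M_strict[OF assms(2) 2] assms(3) by simp
  qed
qed

lemma recip_swap: fixes x y :: real shows "0 < x \<Longrightarrow> 0 < y \<Longrightarrow> 1 / x < y \<Longrightarrow> 1 / y < x"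
  by (simp add: field_simps)

lemma lap_vs_green:
  shows "l \<le> 0 \<Longrightarrow> green p z0 \<le> laplace_ret p z0 l"
    and "l \<ge> 0 \<Longrightarrow> laplace_ret p z0 l \<le> green p z0"
proof -
  assume l: "l \<le> 0"
  show "green p z0 \<le> laplace_ret p z0 l"
    unfolding green_def laplace_ret_def
  proof (rule nn_integral_mono)
    fix t show "ennreal (p t z0 z0) * indicator {0..} t \<le> ennreal (exp (- l * t) * p t z0 z0) * indicator {0..} t"
    proof (cases "t \<ge> 0")
      case True
      have "1 \<le> exp (- l * t)" using l True by (simp add: mult_nonpos_nonneg)
      then have "1 * p t z0 z0 \<le> exp (- l * t) * p t z0 z0" using nonneg[OF True] by (intro mult_right_mono) auto
      then show ?thesis using True by (simp add: ennreal_leI)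
    qed simp
  qed
next
  assume l: "l \<ge> 0"
  show "laplace_ret p z0 l \<le> green p z0"
    unfolding green_def laplace_ret_def
  proof (rule nn_integral_mono)
    fix t show "ennreal (exp (- l * t) * p t z0 z0) * indicator {0..} t \<le> ennreal (p t z0 z0) * indicator {0..} t"
    proof (cases "t \<ge> 0")
      case True
      have "exp (- l * t) \<le> 1" using l True by simp
      then have "exp (- l * t) * p t z0 z0 \<le> 1 * p t z0 z0" using nonneg[OF True] by (intro mult_right_mono) auto
      then show ?thesis using True by (simp add: ennreal_leI)
    qed simp
  qed
qed

lemma green_pos: "green p z0 > 0"
proof -
  have le: "laplace_ret p z0 1 \<le> green p z0" by (rule lap_vs_green(2)) simp
  have eq: "laplace_ret p z0 1 = ennreal (Lr 1)" by (rule lap_fin(1)) simp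
  have "Lr 1 > 0" by (rule Lr_pos) simp
  then have pos: "0 < laplace_ret p z0 1" unfolding eq by simp
  show ?thesis by (rule order.strict_trans2[OF pos le])
qed

lemma green_sup: assumes c: "ennreal c < green p z0" shows "\<exists>l>0. ennreal c < laplace_ret p z0 l"
proof -
  define f where "f n t = ennreal (g (1 / real (Suc n)) t) * indicator {0..} t" for n t
  have meas: "f n \<in> borel_measurable lborel" for n
    unfolding f_def by (rule g_meas) auto
  have inc: "incseq f"
  proof (rule incseq_SucI, rule le_funI)
    fix n t
    show "f n t \<le> f (Suc n) t"
    proof (cases "t \<ge> 0")
      case True
      have "1 / real (Suc (Suc n)) \<le> 1 / real (Suc n)" by (simp add: frac_le)
      then have "- (1 / real (Suc n)) * t \<le> - (1 / real (Suc (Suc n))) * t"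
        using True by (intro mult_right_mono) auto
      then have "g (1 / real (Suc n)) t \<le> g (1 / real (Suc (Suc n))) t"
        unfolding g_def using nonneg[OF True] by (intro mult_right_mono) auto
      then show ?thesis unfolding f_def using True by (simp add: ennreal_leI)
    qed (simp add: f_def)
  qed
  have sup: "(SUP n. f n t) = ennreal (p t z0 z0) * indicator {0..} t" for t
  proof (cases "t \<ge> 0")
    case True
    have "(\<lambda>n. exp (- (1 / real (Suc n)) * t) * p t z0 z0) \<longlonglongrightarrow> exp (- 0 * t) * p t z0 z0"
      by (intro tendsto_intros LIMSEQ_inverse_real_of_nat[unfolded inverse_eq_divide])
    then have "(\<lambda>n. f n t) \<longlonglongrightarrow> ennreal (p t z0 z0) * indicator {0..} t"
      unfolding f_def g_def using True by (simp add: tendsto_ennrealI)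
    moreover have "(\<lambda>n. f n t) \<longlonglongrightarrow> (SUP n. f n t)"
      by (rule LIMSEQ_SUP) (use inc in \<open>auto simp: incseq_def le_fun_def\<close>)
    ultimately show ?thesis using LIMSEQ_unique by blast
  qed (simp add: f_def)
  have "green p z0 = (SUP n. integral\<^sup>N lborel (f n))"
    unfolding green_def sup[symmetric] by (rule nn_integral_monotone_convergence_SUP[OF inc meas])
  also have "\<dots> = (SUP n. laplace_ret p z0 (1 / real (Suc n)))"
    unfolding f_def laplace_ret_def g_def ..
  finally have "ennreal c < (SUP n. laplace_ret p z0 (1 / real (Suc n)))" using c by simp
  then obtain n where "ennreal c < laplace_ret p z0 (1 / real (Suc n))" by (auto simp: less_SUP_iff)
  then show ?thesis by (intro exI[of _ "1 / real (Suc n)"]) auto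
qed

lemma beta_ge1: "beta_crit p z0 \<ge> 1"
  unfolding beta_crit_def by auto

lemma M_ge_beta: assumes l: "l > 0" shows "beta_crit p z0 - 1 \<le> 1 / Lr l"
proof (cases "green p z0 = \<infinity>")
  case True then show ?thesis using M_pos[OF l] by (simp add: beta_crit_def)
next
  case False
  then obtain G where G: "green p z0 = ennreal G" "G \<ge> 0" by (cases "green p z0") auto
  have "ennreal (Lr l) \<le> ennreal G" using lap_vs_green(2)[of l] lap_fin(1)[OF l] l G by simp
  then have "Lr l \<le> G" using G by (simp add: ennreal_le_iff)
  then have "1 / G \<le> 1 / Lr l" using Lr_pos[OF l] by (intro divide_left_mono) auto
  then show ?thesis using G False by (simp add: beta_crit_def)
qed

lemma c_lt_green: assumes m: "m > beta_crit p z0" shows "ennreal (1 / (m - 1)) < green p z0"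
proof (cases "green p z0 = \<infinity>")
  case True then show ?thesis by simp
next
  case False
  then obtain G where G: "green p z0 = ennreal G" "G \<ge> 0" by (cases "green p z0") auto
  have Gp: "G > 0" using green_pos unfolding G(1) by simp
  have "m - 1 > 1 / G" using m False G by (simp add: beta_crit_def)
  then have "1 / (m - 1) < G" using Gp recip_swap[of G "m - 1"] beta_ge1 m by (simp add: order.strict_trans1)
  then show ?thesis using G Gp by (simp add: ennreal_lessI)
qed

lemma rate_char: assumes m: "m > beta_crit p z0"
  shows "rate p z0 m > 0" "1 / Lr (rate p z0 m) = m - 1"
proof -
  have m1: "m > 1" using m beta_ge1 by linarith
  have cg: "ennreal (1 / (m - 1)) < green p z0" by (rule c_lt_green[OF m])
  obtain l1 where l1: "l1 > 0" "ennreal (1 / (m - 1)) < laplace_ret p z0 l1"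
    using green_sup[OF cg] by auto
  have "1 / (m - 1) < Lr l1" using l1 lap_fin[OF l1(1)] m1 ennreal_less_iff[of "1 / (m - 1)" "Lr l1"] by simp
  then have M1: "1 / Lr l1 < m - 1" using m1 Lr_pos[OF l1(1)] recip_swap[of "m - 1" "Lr l1"] by simp
  define l2 where "l2 = m"
  have l2: "l2 > 0" "m - 1 < 1 / Lr l2" using M_ge[of l2] m1 unfolding l2_def by auto
  have l12: "l1 \<le> l2"
  proof (rule ccontr)
    assume "\<not> l1 \<le> l2"
    then have "1 / Lr l2 < 1 / Lr l1" using M_strict l2 by auto
    then show False using M1 l2 by linarith
  qed
  have cont12: "continuous_on {l1..l2} (\<lambda>l. 1 / Lr l)"
    by (rule continuous_on_subset[OF M_cont]) (use l1 in auto)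
  obtain l where l: "l1 \<le> l" "l \<le> l2" "1 / Lr l = m - 1"
    using IVT'[of "\<lambda>l. 1 / Lr l" l1 "m - 1" l2] M1 l2 l12 cont12 by auto
  have lpos: "l > 0" using l l1 by simp
  have lap_l: "laplace_ret p z0 l = ennreal (1 / (m - 1))"
  proof -
    have "Lr l = 1 / (m - 1)" using l(3) Lr_pos[OF lpos] m1 by (simp add: field_simps)
    then show ?thesis using lap_fin(1)[OF lpos] by simp
  qed
  have uniq: "l' = l" if "laplace_ret p z0 l' = ennreal (1 / (m - 1))" for l'
  proof (cases "l' > 0")
    case True
    have "ennreal (Lr l') = ennreal (1 / (m - 1))" using that lap_fin(1)[OF True] by simp
    then have "Lr l' = 1 / (m - 1)" using lap_fin(2)[OF True] m1 by (simp add: ennreal_inj)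
    then have "1 / Lr l' = m - 1" by simp
    then show ?thesis using M_inj[OF True lpos] l(3) by simp
  next
    case False
    then have "green p z0 \<le> laplace_ret p z0 l'" by (intro lap_vs_green(1)) simp
    then show ?thesis using cg that by simp
  qed
  have "rate p z0 m = l"
    unfolding rate_def using m by (simp add: the_equality[of _ l] lap_l uniq)
  then show "rate p z0 m > 0" "1 / Lr (rate p z0 m) = m - 1" using lpos l(3) by auto
qed

lemma rate_low: "m \<le> beta_crit p z0 \<Longrightarrow> rate p z0 m = 0"
  unfolding rate_def by simp

lemma rate_nonneg: "rate p z0 m \<ge> 0"
  using rate_char(1)[of m] rate_low[of m] by (cases "m > beta_crit p z0") auto

end

context ctmc begin

lemma rate_one: "rate p z0 1 = 0"
  using rate_low beta_ge1 by simp

lemma rate_le: assumes "m \<ge> 1" shows "rate p z0 m \<le> m - 1"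
proof (cases "m > beta_crit p z0")
  case True
  have "rate p z0 m \<le> 1 / Lr (rate p z0 m)" by (rule M_ge[OF rate_char(1)[OF True]])
  then show ?thesis using rate_char(2)[OF True] by simp
next
  case False then show ?thesis using rate_low assms by simp
qed

lemma M_at_zero:
  assumes r: "r > 0" and t: "0 < t" "t < 1" and c: "\<And>l. l > 0 \<Longrightarrow> v \<le> 1 / Lr l"
  shows "(1 - t) * v + t * (1 / Lr r) \<le> 1 / Lr (t * r)"
proof -
  have tr: "t * r > 0" using r t by simp
  have ic: "isCont (\<lambda>l. 1 / Lr l) (t * r)"
    using continuous_on_eq_continuous_at[OF open_greaterThan, THEN iffD1, OF M_cont] tr by auto
  have "((\<lambda>e. (1 - t) * e + t * r) \<longlongrightarrow> (1 - t) * 0 + t * r) (at_right 0)"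
    by (intro tendsto_intros)
  then have lim0: "((\<lambda>e. (1 - t) * e + t * r) \<longlongrightarrow> t * r) (at_right 0)" by simp
  have lim: "((\<lambda>e. 1 / Lr ((1 - t) * e + t * r)) \<longlongrightarrow> 1 / Lr (t * r)) (at_right 0)"
    using isCont_tendsto_compose[OF ic lim0] by simp
  have ev: "\<forall>\<^sub>F e in at_right (0::real). (1 - t) * v + t * (1 / Lr r) \<le> 1 / Lr ((1 - t) * e + t * r)"
    unfolding eventually_at_right_field
  proof (intro exI[of _ 1] conjI allI impI)
    fix e :: real assume e: "0 < e" "e < 1"
    have "(1 - t) * (1 / Lr e) + t * (1 / Lr r) \<le> 1 / Lr ((1 - t) *\<^sub>R e + t *\<^sub>R r)"
      by (rule concave_onD[OF M_concave]) (use t e r in auto)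
    moreover have "(1 - t) * v \<le> (1 - t) * (1 / Lr e)" using c[OF e(1)] t by (intro mult_left_mono) auto
    ultimately show "(1 - t) * v + t * (1 / Lr r) \<le> 1 / Lr ((1 - t) * e + t * r)" by simp
  qed simp
  show ?thesis by (rule tendsto_le[OF _ lim tendsto_const ev]) simp
qed

lemma rate_convex: "convex_on {1..} (rate p z0)"
proof (rule convex_on_linorderI)
  show "convex {1::real..}" by simp
  fix t x y :: real assume t: "0 < t" "t < 1" and x: "x \<in> {1..}" and y: "y \<in> {1..}" and xy: "x < y"
  define B where "B = beta_crit p z0"
  define R where "R = rate p z0"
  define w where "w = (1 - t) * x + t * y"
  have Rnn: "\<And>m. R m \<ge> 0" unfolding R_def by (rule rate_nonneg)
  have wy: "w < y"
  proof -
    have "0 < (1 - t) * (y - x)" using t xy by simp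
    moreover have "y - w = (1 - t) * (y - x)" by (simp add: w_def algebra_simps)
    ultimately show ?thesis by linarith
  qed
  have rhs0: "0 \<le> (1 - t) * R x + t * R y" using Rnn t by (intro add_nonneg_nonneg mult_nonneg_nonneg) auto
  have "R w \<le> (1 - t) * R x + t * R y"
  proof (cases "w > B")
    case False then show ?thesis using rate_low rhs0 unfolding R_def B_def by simp
  next
    case True
    have yB: "y > B" using True wy by simp
    have ry: "R y > 0" "1 / Lr (R y) = y - 1" using rate_char[OF yB[unfolded B_def]] unfolding R_def by auto
    have rw: "R w > 0" "1 / Lr (R w) = w - 1" using rate_char[OF True[unfolded B_def]] unfolding R_def by auto
    define lam where "lam = (1 - t) * R x + t * R y"
    have lam: "lam > 0" unfolding lam_def using ry t Rnn[of x]
      by (intro add_nonneg_pos mult_nonneg_nonneg mult_pos_pos) auto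
    have key: "w - 1 \<le> 1 / Lr lam"
    proof (cases "x > B")
      case True
      have rx: "R x > 0" "1 / Lr (R x) = x - 1" using rate_char[OF True[unfolded B_def]] unfolding R_def by auto
      have "(1 - t) * (1 / Lr (R x)) + t * (1 / Lr (R y)) \<le> 1 / Lr ((1 - t) *\<^sub>R R x + t *\<^sub>R R y)"
        by (rule concave_onD[OF M_concave]) (use t rx ry in auto)
      then show ?thesis using rx ry unfolding lam_def w_def by (simp add: algebra_simps)
    next
      case False
      have rx: "R x = 0" using False rate_low unfolding R_def B_def by simp
      have "(1 - t) * (B - 1) + t * (1 / Lr (R y)) \<le> 1 / Lr (t * R y)"
        by (rule M_at_zero[OF ry(1) t]) (use M_ge_beta in \<open>auto simp: B_def\<close>)
      moreover have "(1 - t) * (x - 1) \<le> (1 - t) * (B - 1)" using False t by (intro mult_left_mono) auto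
      ultimately show ?thesis using ry rx unfolding lam_def w_def by (simp add: algebra_simps)
    qed
    show ?thesis
    proof (rule ccontr)
      assume "\<not> R w \<le> (1 - t) * R x + t * R y"
      then have "lam < R w" unfolding lam_def by simp
      then have "1 / Lr lam < 1 / Lr (R w)" by (rule M_strict[OF lam])
      then show False using key rw by simp
    qed
  qed
  then show "rate p z0 ((1 - t) *\<^sub>R x + t *\<^sub>R y) \<le> (1 - t) * rate p z0 x + t * rate p z0 y"
    unfolding R_def w_def by simp
qed

lemma rate_limit: "((\<lambda>m. rate p z0 m / (m - 1)) \<longlongrightarrow> 1) at_top"
proof (rule tendstoI)
  fix \<epsilon> :: real assume \<epsilon>: "\<epsilon> > 0"
  define e where "e = min (1/2) (\<epsilon> / 4)"
  have e: "e > 0" "e \<le> 1/2" "e \<le> \<epsilon> / 4" using \<epsilon> by (auto simp: e_def)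
  obtain d where d: "d > 0" "\<And>s. 0 \<le> s \<Longrightarrow> s \<le> d \<Longrightarrow> 1 - p s z0 z0 \<le> e" using small[OF e(1)] by auto
  define K where "K = max 1 (ln (4 / \<epsilon>) / d)"
  have K1: "K > 0" "ln (4 / \<epsilon>) / d \<le> K" by (auto simp: K_def)
  have K: "K > 0" "ln (4 / \<epsilon>) \<le> K * d" using K1 d(1) by (auto simp: divide_le_eq)
  define N where "N = max (beta_crit p z0) (1 / Lr K + 1) + 1"
  show "\<forall>\<^sub>F m in at_top. dist (rate p z0 m / (m - 1)) 1 < \<epsilon>"
    unfolding eventually_at_top_linorder
  proof (intro exI[of _ N] allI impI)
    fix m assume m: "m \<ge> N"
    have mB: "m > beta_crit p z0" using m unfolding N_def by simp
    define r where "r = rate p z0 m"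
    have r: "r > 0" "1 / Lr r = m - 1" using rate_char[OF mB] unfolding r_def by auto
    have Lrp: "Lr r > 0" using Lr_pos[OF r(1)] .
    have m1: "m - 1 = 1 / Lr r" using r by simp
    have rK: "r > K"
    proof (rule ccontr)
      assume "\<not> r > K"
      then have "1 / Lr r \<le> 1 / Lr K" using M_strict[OF r(1)] by (cases "r = K") (auto simp: less_imp_le)
      then show False using r m unfolding N_def by simp
    qed
    have ratio: "rate p z0 m / (m - 1) = r * Lr r" unfolding r_def[symmetric] m1 by simp
    have up: "r * Lr r \<le> 1" using Lr_le[OF r(1)] r(1) by (simp add: field_simps)
    have "(1 - e) * (1 - exp (- r * d)) / r \<le> Lr r" by (rule lap_lower[OF r(1) d(1) _ d(2)]) (use e in auto)
    then have lo: "(1 - e) * (1 - exp (- r * d)) \<le> r * Lr r" using r(1) by (simp add: field_simps)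
    have "exp (- r * d) \<le> exp (- K * d)" using rK d(1) by simp
    also have "\<dots> \<le> exp (- ln (4 / \<epsilon>))" using K by simp
    also have "\<dots> = \<epsilon> / 4" using \<epsilon> by (simp add: exp_minus)
    finally have ex: "exp (- r * d) \<le> \<epsilon> / 4" .
    have "(1 - e) * (1 - \<epsilon> / 4) \<le> (1 - e) * (1 - exp (- r * d))"
      using ex e by (intro mult_left_mono) auto
    moreover have "1 - e - \<epsilon> / 4 \<le> (1 - e) * (1 - \<epsilon> / 4)"
    proof -
      have "0 \<le> e * (\<epsilon> / 4)" using e \<epsilon> by simp
      then show ?thesis by (simp add: algebra_simps)
    qed
    ultimately have "1 - \<epsilon> / 2 \<le> r * Lr r" using lo e by linarith
    then show "dist (rate p z0 m / (m - 1)) 1 < \<epsilon>"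
      unfolding ratio dist_real_def using up \<epsilon> by (simp add: abs_le_iff)
  qed
qed

end

theorem corollary1:
  fixes A :: "'a::countable \<Rightarrow> 'a \<Rightarrow> real"
    and p :: "real \<Rightarrow> 'a \<Rightarrow> 'a \<Rightarrow> real"
    and x0 :: 'a
  assumes "irreducible_ctmc A p"
  shows "convex_on {1..} (rate p x0) \<and>
         rate p x0 1 = 0 \<and>
         (\<forall>m\<ge>1. rate p x0 m \<le> m - 1) \<and>
         ((\<lambda>m. rate p x0 m / (m - 1)) \<longlongrightarrow> 1) at_top"
proof -
  interpret c: ctmc A p x0 by unfold_locales (rule assms)
  show ?thesis using c.rate_convex c.rate_one c.rate_le c.rate_limit by blast
qed

end
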